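(* Let $n\ge 1$, $t_1<\dots<t_{n+1}$, let $\varphi_0,\dots,\varphi_{n+2}$ be the natural basis and $\mathbf{C}=[c_{k,l}]_{k,l=1}^{n+3}$ with $c_{k,l}=\int_{t_1}^{t_{n+1}}\varphi_{k-1}''(t)\varphi_{l-1}''(t)\,dt$. Then: (i) $\mathbf{C}$ is symmetric and non-negative definite; (ii) for $u_1,u_{n+1}\in\mathbb{R}$ and $\boldsymbol{p}\in\mathbb{R}^{n+1}$, $(u_1,\boldsymbol{p}^T,u_{n+1})\mathbf{C}(u_1,\boldsymbol{p}^T,u_{n+1})^T=0$ if and only if $u_1=u_{n+1}=0$ and $\boldsymbol{p}$ belongs to the range $R(\mathbf{L})$ of the $(n+1)\times 2$ matrix $\mathbf{L}$ whose $i$-th row is $(1,t_i)$; (iii) $c_{1,j+1}=c_{n+3,j+1}=0$ for all $j=1,\dots,n+1$ (so, by symmetry, $\mathbf{C}$ has the block form with $c_{1,1},c_{1,n+3},c_{n+3,1},c_{n+3,n+3}$ in the corners, the middle block $\mathbf{C}(2,n+2)=[c_{ij}:i,j=2,\dots,n+2]$, and zeros elsewhere); (iv) the $2\times2$ matrix $\begin{pmatrix}c_{1,1}&c_{1,n+3}\\ c_{n+3,1}&c_{n+3,n+3}\end{pmatrix}$ is symmetric positive definite; (v) the null space of $\mathbf{C}(2,n+2)$ equals $R(\mathbf{L})$; (vi) for $s=u_1\varphi_0+\sum_{j=1}^{n+1}p_j\varphi_j+u_{n+1}\varphi_{n+2}$, $$\int_{t_1}^{t_{n+1}}|s''(t)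|^2dt=u_1^2c_{1,1}+u_{n+1}^2c_{n+3,n+3}+2c_{1,n+3}u_1u_{n+1}+\boldsymbol{p}^T\mathbf{C}(2,n+2)\boldsymbol{p}.$$
   Context: $S_3\cap C^2$ is the set of $C^2$ functions on $[t_1,t_{n+1}]$ that are cubic polynomials on each $[t_i,t_{i+1}]$. The natural basis is defined as follows: $\varphi_0$ is the unique element of $S_3\cap C^2$ with $\varphi_0(t_i)=0$ for all $i$, $\varphi_0''(t_1)=1$, $\varphi_0''(t_{n+1})=0$; for $j=1,\dots,n+1$, $\varphi_j$ is the unique element of $S_3\cap C^2$ with $\varphi_j(t_i)=\delta_{ij}$ for all $i$ and $\varphi_j''(t_1)=\varphi_j''(t_{n+1})=0$; $\varphi_{n+2}$ is the unique element of $S_3\cap C^2$ with $\varphi_{n+2}(t_i)=0$ for all $i$, $\varphi_{n+2}''(t_1)=0$, $\varphi_{n+2}''(t_{n+1})=1$. Every $s\in S_3\cap C^2$ equals $u_1\varphi_0+\sum_j p_j\varphi_j+u_{n+1}\varphi_{n+2}$ with $p_j=s(t_j)$, $u_1=s''(t_1)$, $u_{n+1}=s''(t_{n+1})$. *)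

theory Defs
  imports "HOL-Analysis.Analysis" "HOL-Computational_Algebra.Polynomial"
begin

definition has_second_deriv_on :: "real \<Rightarrow> real \<Rightarrow> (real \<Rightarrow> real) \<Rightarrow> (real \<Rightarrow> real) \<Rightarrow> bool" where
  "has_second_deriv_on a b s s2 \<longleftrightarrow>
     (\<exists>s1. \<forall>x\<in>{a..b}. (s has_real_derivative s1 x) (at x within {a..b}) \<and>
                        (s1 has_real_derivative s2 x) (at x within {a..b}))"

definition C2_on :: "real \<Rightarrow> real \<Rightarrow> (real \<Rightarrow> real) \<Rightarrow> bool" where
  "C2_on a b s \<longleftrightarrow> (\<exists>s2. has_second_deriv_on a b s s2 \<and> continuous_on {a..b} s2)"

definition cubic_spline_C2 :: "nat \<Rightarrow> (nat \<Rightarrow> real) \<Rightarrow> (real \<Rightarrow> real) \<Rightarrow> bool" where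
  "cubic_spline_C2 n t s \<longleftrightarrow>
     C2_on (t 1) (t (n+1)) s \<and>
     (\<forall>i\<in>{1..n}. \<exists>q :: real poly. degree q \<le> 3 \<and> (\<forall>x\<in>{t i..t (Suc i)}. s x = poly q x))"

end

theory Submission
  imports Defs
begin


lemma deriv_unique_cl:
  fixes a b x :: real
  assumes "a < b" "x \<in> {a..b}" "(f has_real_derivative d1) (at x within {a..b})"
    "(f has_real_derivative d2) (at x within {a..b})"
  shows "d1 = d2"
  using vector_derivative_unique_within_closed_interval[of a b x f d1 d2] assms
  by (simp add: has_real_derivative_iff_has_vector_derivative)

lemma deriv_transform_on:
  fixes S :: "real set"
  assumes "(f has_real_derivative d) (at x within S)" "x \<in> S" "\<And>y. y \<in> S \<Longrightarrow> f y = g y"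
  shows "(g has_real_derivative d) (at x within S)"
  using has_field_derivative_transform_within[OF assms(1) zero_less_one assms(2)] assms(3) by blast

lemma second_deriv_unique:
  assumes "a < b" "has_second_deriv_on a b f f2" "has_second_deriv_on a b g g2"
    "\<And>x. x \<in> {a..b} \<Longrightarrow> f x = g x" "x \<in> {a..b}"
  shows "f2 x = g2 x"
proof -
  obtain f1 where f1: "\<forall>x\<in>{a..b}. (f has_real_derivative f1 x) (at x within {a..b}) \<and>
                        (f1 has_real_derivative f2 x) (at x within {a..b})"
    using assms(2) unfolding has_second_deriv_on_def by blast
  obtain g1 where g1: "\<forall>x\<in>{a..b}. (g has_real_derivative g1 x) (at x within {a..b}) \<and>
                        (g1 has_real_derivative g2 x) (at x within {a..b})"
    using assms(3) unfolding has_second_deriv_on_def by blast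
  have e1: "f1 y = g1 y" if "y \<in> {a..b}" for y
  proof -
    have "(g has_real_derivative f1 y) (at y within {a..b})"
      using deriv_transform_on[of f "f1 y" y "{a..b}" g] f1 that assms(4) by blast
    then show ?thesis using deriv_unique_cl[OF assms(1) that] g1 that by blast
  qed
  have "(g1 has_real_derivative f2 x) (at x within {a..b})"
    using deriv_transform_on[of f1 "f2 x" x "{a..b}" g1] f1 assms(5) e1 by blast
  then show ?thesis using deriv_unique_cl[OF assms(1) assms(5)] g1 assms(5) by blast
qed

lemma sd_add:
  assumes "has_second_deriv_on a b f f2" "has_second_deriv_on a b g g2"
  shows "has_second_deriv_on a b (\<lambda>x. f x + g x) (\<lambda>x. f2 x + g2 x)"
proof -
  obtain f1 where f1: "\<forall>x\<in>{a..b}. (f has_real_derivative f1 x) (at x within {a..b}) \<and>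
                        (f1 has_real_derivative f2 x) (at x within {a..b})"
    using assms(1) unfolding has_second_deriv_on_def by blast
  obtain g1 where g1: "\<forall>x\<in>{a..b}. (g has_real_derivative g1 x) (at x within {a..b}) \<and>
                        (g1 has_real_derivative g2 x) (at x within {a..b})"
    using assms(2) unfolding has_second_deriv_on_def by blast
  show ?thesis unfolding has_second_deriv_on_def
    by (rule exI[of _ "\<lambda>x. f1 x + g1 x"]) (use f1 g1 in \<open>auto intro: derivative_intros\<close>)
qed

lemma sd_diff:
  assumes "has_second_deriv_on a b f f2" "has_second_deriv_on a b g g2"
  shows "has_second_deriv_on a b (\<lambda>x. f x - g x) (\<lambda>x. f2 x - g2 x)"
proof -
  obtain f1 where f1: "\<forall>x\<in>{a..b}. (f has_real_derivative f1 x) (at x within {a..b}) \<and>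
                        (f1 has_real_derivative f2 x) (at x within {a..b})"
    using assms(1) unfolding has_second_deriv_on_def by blast
  obtain g1 where g1: "\<forall>x\<in>{a..b}. (g has_real_derivative g1 x) (at x within {a..b}) \<and>
                        (g1 has_real_derivative g2 x) (at x within {a..b})"
    using assms(2) unfolding has_second_deriv_on_def by blast
  show ?thesis unfolding has_second_deriv_on_def
    by (rule exI[of _ "\<lambda>x. f1 x - g1 x"]) (use f1 g1 in \<open>auto intro: derivative_intros\<close>)
qed

lemma sd_scale:
  assumes "has_second_deriv_on a b f f2"
  shows "has_second_deriv_on a b (\<lambda>x. u * f x) (\<lambda>x. u * f2 x)"
proof -
  obtain f1 where f1: "\<forall>x\<in>{a..b}. (f has_real_derivative f1 x) (at x within {a..b}) \<and>
                        (f1 has_real_derivative f2 x) (at x within {a..b})"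
    using assms(1) unfolding has_second_deriv_on_def by blast
  show ?thesis unfolding has_second_deriv_on_def
    by (rule exI[of _ "\<lambda>x. u * f1 x"]) (use f1 in \<open>auto intro: DERIV_cmult\<close>)
qed

lemma sd_zero: "has_second_deriv_on a b (\<lambda>x. 0) (\<lambda>x. 0)"
  unfolding has_second_deriv_on_def
  by (rule exI[of _ "\<lambda>x. 0"]) (auto intro: derivative_intros)

lemma sd_lin: "has_second_deriv_on a b (\<lambda>x. c0 + c1 * x) (\<lambda>x. 0)"
  unfolding has_second_deriv_on_def
  by (rule exI[of _ "\<lambda>x. c1"]) (auto intro!: derivative_eq_intros)

lemma sd_sum:
  assumes "finite K" "\<And>k. k \<in> K \<Longrightarrow> has_second_deriv_on a b (f k) (f2 k)"
  shows "has_second_deriv_on a b (\<lambda>x. \<Sum>k\<in>K. u k * f k x) (\<lambda>x. \<Sum>k\<in>K. u k * f2 k x)"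
  using assms
proof (induction K rule: finite_induct)
  case empty then show ?case using sd_zero by simp
next
  case (insert k K)
  show ?case using sd_add[OF sd_scale[of a b "f k" "f2 k" "u k"] insert.IH] insert by simp
qed

definition pw :: "nat \<Rightarrow> (nat \<Rightarrow> real) \<Rightarrow> (real \<Rightarrow> real) \<Rightarrow> bool" where
  "pw n t g2 \<longleftrightarrow> (\<forall>i\<in>{1..n}. \<exists>k. \<forall>x\<in>{t i..t (Suc i)}.
      (g2 has_real_derivative k) (at x within {t i..t (Suc i)}))"

lemma pw_add: "pw n t f \<Longrightarrow> pw n t g \<Longrightarrow> pw n t (\<lambda>x. f x + g x)"
  unfolding pw_def by (metis DERIV_add)

lemma pw_scale: "pw n t f \<Longrightarrow> pw n t (\<lambda>x. u * f x)"
  unfolding pw_def by (metis DERIV_cmult)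

lemma pw_zero: "pw n t (\<lambda>x. 0)"
  unfolding pw_def by (auto intro: DERIV_const)

lemma pw_sum: "finite K \<Longrightarrow> (\<And>k. k \<in> K \<Longrightarrow> pw n t (g k)) \<Longrightarrow> pw n t (\<lambda>x. \<Sum>k\<in>K. u k * g k x)"
proof (induction K rule: finite_induct)
  case empty then show ?case using pw_zero by simp
next
  case (insert k K)
  then show ?case using pw_add[OF pw_scale[of n t "g k" "u k"]] by simp
qed

lemma pw_spline:
  assumes inc: "\<forall>i\<in>{1..n}. t i < t (Suc i)"
    and mono: "\<And>i j. 1 \<le> i \<Longrightarrow> i \<le> j \<Longrightarrow> j \<le> n+1 \<Longrightarrow> t i \<le> t j"
    and spl: "cubic_spline_C2 n t g" and sd: "has_second_deriv_on (t 1) (t (n+1)) g g2"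
  shows "pw n t g2"
  unfolding pw_def
proof
  fix i assume i: "i \<in> {1..n}"
  obtain q :: "real poly" where q: "degree q \<le> 3" "\<forall>x\<in>{t i..t (Suc i)}. g x = poly q x"
    using spl i unfolding cubic_spline_C2_def by blast
  obtain g1 where g1: "\<forall>x\<in>{t 1..t (n+1)}. (g has_real_derivative g1 x) (at x within {t 1..t (n+1)}) \<and>
                        (g1 has_real_derivative g2 x) (at x within {t 1..t (n+1)})"
    using sd unfolding has_second_deriv_on_def by blast
  let ?P = "{t i..t (Suc i)}"
  have lt: "t i < t (Suc i)" using inc i by blast
  have sub: "?P \<subseteq> {t 1..t (n+1)}" using mono[of 1 i] mono[of "Suc i" "n+1"] i by auto
  have e1: "g1 x = poly (pderiv q) x" if x: "x \<in> ?P" for x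
  proof -
    have "(g has_real_derivative g1 x) (at x within ?P)"
      using g1 sub x DERIV_subset by blast
    then have "(poly q has_real_derivative g1 x) (at x within ?P)"
      using deriv_transform_on[of g "g1 x" x ?P "poly q"] q x by blast
    moreover have "(poly q has_real_derivative poly (pderiv q) x) (at x within ?P)"
      using poly_DERIV has_field_derivative_at_within by blast
    ultimately show ?thesis using deriv_unique_cl[OF lt x] by blast
  qed
  have e2: "g2 x = poly (pderiv (pderiv q)) x" if x: "x \<in> ?P" for x
  proof -
    have "(g1 has_real_derivative g2 x) (at x within ?P)"
      using g1 sub x DERIV_subset by blast
    then have "(poly (pderiv q) has_real_derivative g2 x) (at x within ?P)"
      using deriv_transform_on[of g1 "g2 x" x ?P "poly (pderiv q)"] e1 x by blast
    moreover have "(poly (pderiv q) has_real_derivative poly (pderiv (pderiv q)) x) (at x within ?P)"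
      using poly_DERIV has_field_derivative_at_within by blast
    ultimately show ?thesis using deriv_unique_cl[OF lt x] by blast
  qed
  have dg: "degree (pderiv (pderiv (pderiv q))) = 0" using q(1) by (simp add: degree_pderiv)
  then obtain k where k: "pderiv (pderiv (pderiv q)) = [:k:]" by (metis degree_eq_zeroE)
  show "\<exists>k. \<forall>x\<in>?P. (g2 has_real_derivative k) (at x within ?P)"
  proof (intro exI ballI)
    fix x assume x: "x \<in> ?P"
    have "(poly (pderiv (pderiv q)) has_real_derivative k) (at x within ?P)"
      using poly_DERIV[of "pderiv (pderiv q)" x] k has_field_derivative_at_within by fastforce
    then show "(g2 has_real_derivative k) (at x within ?P)"
      using deriv_transform_on[of "poly (pderiv (pderiv q))" k x ?P g2] e2 x by fastforce
  qed
qed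

lemma ibp:
  assumes inc: "\<forall>i\<in>{1..n}. t i < t (Suc i)"
    and mono: "\<And>i j. 1 \<le> i \<Longrightarrow> i \<le> j \<Longrightarrow> j \<le> n+1 \<Longrightarrow> t i \<le> t j"
    and sd: "has_second_deriv_on (t 1) (t (n+1)) f f2"
    and fz: "\<forall>i\<in>{1..n+1}. f (t i) = 0"
    and pg: "pw n t g2" and g0: "g2 (t 1) = 0" and g1: "g2 (t (n+1)) = 0"
  shows "((\<lambda>x. f2 x * g2 x) has_integral 0) {t 1..t (n+1)}"
proof -
  obtain f1 where f1: "\<forall>x\<in>{t 1..t (n+1)}. (f has_real_derivative f1 x) (at x within {t 1..t (n+1)}) \<and>
                        (f1 has_real_derivative f2 x) (at x within {t 1..t (n+1)})"
    using sd unfolding has_second_deriv_on_def by blast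
  have "m \<le> n \<Longrightarrow> ((\<lambda>x. f2 x * g2 x) has_integral (f1 (t (m+1)) * g2 (t (m+1)) - f1 (t 1) * g2 (t 1))) {t 1..t (m+1)}" for m
  proof (induction m)
    case 0
    have "((\<lambda>x. f2 x * g2 x) has_integral 0) {t 1}" by (rule has_integral_refl(2))
    then show ?case by simp
  next
    case (Suc m)
    let ?a = "t (Suc m)" and ?b = "t (Suc (Suc m))"
    let ?P = "{?a..?b}"
    have i: "Suc m \<in> {1..n}" using Suc.prems by simp
    obtain k where k: "\<forall>x\<in>?P. (g2 has_real_derivative k) (at x within ?P)"
      using pg i unfolding pw_def by blast
    have lt: "?a < ?b" using inc i by blast
    have sub: "?P \<subseteq> {t 1..t (n+1)}" using mono[of 1 "Suc m"] mono[of "Suc (Suc m)" "n+1"] i by auto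
    define h where "h x = f1 x * g2 x - k * f x" for x
    have hd: "(h has_vector_derivative f2 x * g2 x) (at x within ?P)" if x: "x \<in> ?P" for x
    proof -
      have a: "(f1 has_real_derivative f2 x) (at x within ?P)"
        using f1 sub x DERIV_subset by blast
      have b: "(f has_real_derivative f1 x) (at x within ?P)"
        using f1 sub x DERIV_subset by blast
      have "(h has_real_derivative (f2 x * g2 x + k * f1 x - k * f1 x)) (at x within ?P)"
      proof -
        have kx: "(g2 has_real_derivative k) (at x within ?P)" using k x by blast
        show ?thesis unfolding h_def[abs_def] using DERIV_diff[OF DERIV_mult[OF a kx] DERIV_cmult[OF b, of k]] .
      qed
      then show ?thesis by (simp add: has_real_derivative_iff_has_vector_derivative)
    qed
    have I1: "((\<lambda>x. f2 x * g2 x) has_integral (h ?b - h ?a)) ?P"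
      using fundamental_theorem_of_calculus[of ?a ?b h "\<lambda>x. f2 x * g2 x"] hd lt by auto
    have fa: "f ?a = 0" "f ?b = 0" using fz Suc.prems by auto
    have I1': "((\<lambda>x. f2 x * g2 x) has_integral (f1 ?b * g2 ?b - f1 ?a * g2 ?a)) ?P"
      using I1 fa unfolding h_def by simp
    have IH: "((\<lambda>x. f2 x * g2 x) has_integral (f1 ?a * g2 ?a - f1 (t 1) * g2 (t 1))) {t 1..?a}"
      using Suc by simp
    have "t 1 \<le> ?a" using mono[of 1 "Suc m"] Suc.prems by simp
    from has_integral_combine[OF this less_imp_le[OF lt] IH I1']
    show ?case by simp
  qed
  from this[of n] show ?thesis using g0 g1 by simp
qed

lemma qf:
  fixes e :: "'k \<Rightarrow> real \<Rightarrow> real"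
  assumes "finite K" "\<And>k. k \<in> K \<Longrightarrow> continuous_on {a..b} (e k)"
  shows "integral {a..b} (\<lambda>x. (\<Sum>k\<in>K. v k * e k x)^2) =
         (\<Sum>k\<in>K. \<Sum>l\<in>K. v k * integral {a..b} (\<lambda>x. e k x * e l x) * v l)"
proof -
  have int: "(\<lambda>x. e k x * e l x) integrable_on {a..b}" if "k \<in> K" "l \<in> K" for k l
    using assms(2) that by (intro integrable_continuous_interval continuous_on_mult) auto
  have int2: "(\<lambda>x. c * (e k x * e l x)) integrable_on {a..b}" if "k \<in> K" "l \<in> K" for k l c
    using integrable_on_cmult_left[OF int[OF that], of c] by simp
  have eq: "(\<Sum>k\<in>K. v k * e k x)^2 = (\<Sum>k\<in>K. \<Sum>l\<in>K. (v k * v l) * (e k x * e l x))" for x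
    by (simp add: power2_eq_square sum_product algebra_simps)
  have "integral {a..b} (\<lambda>x. (\<Sum>k\<in>K. v k * e k x)^2) =
        integral {a..b} (\<lambda>x. \<Sum>k\<in>K. \<Sum>l\<in>K. (v k * v l) * (e k x * e l x))"
    by (simp only: eq)
  also have "\<dots> = (\<Sum>k\<in>K. integral {a..b} (\<lambda>x. \<Sum>l\<in>K. (v k * v l) * (e k x * e l x)))"
    by (rule integral_sum) (use assms(1) int2 in \<open>auto intro!: integrable_sum\<close>)
  also have "\<dots> = (\<Sum>k\<in>K. \<Sum>l\<in>K. integral {a..b} (\<lambda>x. (v k * v l) * (e k x * e l x)))"
    by (rule sum.cong[OF refl], rule integral_sum) (use assms(1) int2 in \<open>auto\<close>)
  also have "\<dots> = (\<Sum>k\<in>K. \<Sum>l\<in>K. v k * integral {a..b} (\<lambda>x. e k x * e l x) * v l)"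
    by (simp add: algebra_simps)
  finally show ?thesis .
qed

lemma int_sq_zero:
  fixes h :: "real \<Rightarrow> real"
  assumes "a < b" "continuous_on {a..b} h" "integral {a..b} (\<lambda>x. (h x)^2) = 0" "x \<in> {a..b}"
  shows "h x = 0"
proof -
  have "continuous_on {a..b} (\<lambda>x. (h x)^2)" using assms(2) by (intro continuous_intros)
  then have "\<forall>x\<in>{a..b}. (h x)^2 = 0" using integral_eq_0_iff[of a b "\<lambda>x. (h x)^2"] assms by simp
  then show ?thesis using assms(4) by simp
qed

lemma reidx:
  fixes G :: "nat \<Rightarrow> real"
  shows "(\<Sum>k=1..n+3. (if k = 1 then u else if k = n+3 then v else p (k-1)) * G k) =
     u * G 1 + (\<Sum>j=1..n+1. p j * G (j+1)) + v * G (n+3)"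
proof -
  let ?W = "\<lambda>k. (if k = 1 then u else if k = n+3 then v else p (k-1)) * G k"
  have "(\<Sum>k=1..n+3. ?W k) = ?W 1 + (\<Sum>k=Suc 1..Suc (Suc (n+1)). ?W k)"
    by (subst sum.atLeast_Suc_atMost) (auto simp: numeral_3_eq_3)
  also have "(\<Sum>k=Suc 1..Suc (Suc (n+1)). ?W k) = (\<Sum>k=Suc 1..Suc (n+1). ?W k) + ?W (n+3)"
    by (subst sum.cl_ivl_Suc) (simp add: numeral_3_eq_3)
  also have "(\<Sum>k=Suc 1..Suc (n+1). ?W k) = (\<Sum>j=1..n+1. ?W (Suc j))"
    by (rule sum.shift_bounds_cl_Suc_ivl)
  also have "\<dots> = (\<Sum>j=1..n+1. p j * G (j+1))"
    by (rule sum.cong) auto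
  finally show ?thesis by simp
qed

lemma block:
  fixes c :: "nat \<Rightarrow> nat \<Rightarrow> real"
  assumes z: "\<forall>j\<in>{1..n+1}. c 1 (j+1) = 0 \<and> c (n+3) (j+1) = 0 \<and> c (j+1) 1 = 0 \<and> c (j+1) (n+3) = 0"
    and s: "c (n+3) 1 = c 1 (n+3)"
  shows "(\<Sum>k=1..n+3. \<Sum>l=1..n+3. (if k = 1 then u else if k = n+3 then v else p (k-1)) * c k l *
            (if l = 1 then u else if l = n+3 then v else p (l-1))) =
     u^2 * c 1 1 + v^2 * c (n+3) (n+3) + 2 * c 1 (n+3) * u * v +
           (\<Sum>i=1..n+1. \<Sum>j=1..n+1. p i * c (i+1) (j+1) * p j)"
proof -
  let ?W = "\<lambda>k. (if k = 1 then u else if k = n+3 then v else p (k-1))"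
  have inner: "(\<Sum>l=1..n+3. ?W k * c k l * ?W l) = ?W k * (u * c k 1 + (\<Sum>j=1..n+1. p j * c k (j+1)) + v * c k (n+3))" for k
  proof -
    have "(\<Sum>l=1..n+3. ?W k * c k l * ?W l) = ?W k * (\<Sum>l=1..n+3. ?W l * c k l)"
      by (simp add: sum_distrib_left algebra_simps)
    also have "(\<Sum>l=1..n+3. ?W l * c k l) = u * c k 1 + (\<Sum>j=1..n+1. p j * c k (j+1)) + v * c k (n+3)"
      by (rule reidx)
    finally show ?thesis .
  qed
  have "(\<Sum>k=1..n+3. \<Sum>l=1..n+3. ?W k * c k l * ?W l) =
        (\<Sum>k=1..n+3. ?W k * (u * c k 1 + (\<Sum>j=1..n+1. p j * c k (j+1)) + v * c k (n+3)))"
    using inner by simp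
  also have "\<dots> = u * (u * c 1 1 + (\<Sum>j=1..n+1. p j * c 1 (j+1)) + v * c 1 (n+3))
     + (\<Sum>i=1..n+1. p i * (u * c (i+1) 1 + (\<Sum>j=1..n+1. p j * c (i+1) (j+1)) + v * c (i+1) (n+3)))
     + v * (u * c (n+3) 1 + (\<Sum>j=1..n+1. p j * c (n+3) (j+1)) + v * c (n+3) (n+3))"
    by (rule reidx)
  also have "(\<Sum>j=1..n+1. p j * c 1 (j+1)) = 0" using z by simp
  also have "(\<Sum>j=1..n+1. p j * c (n+3) (j+1)) = 0" using z by simp
  also have "(\<Sum>i=1..n+1. p i * (u * c (i+1) 1 + (\<Sum>j=1..n+1. p j * c (i+1) (j+1)) + v * c (i+1) (n+3)))
      = (\<Sum>i=1..n+1. \<Sum>j=1..n+1. p i * c (i+1) (j+1) * p j)"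
    by (rule sum.cong) (use z in \<open>auto simp: sum_distrib_left algebra_simps\<close>)
  finally show ?thesis using s by (simp add: power2_eq_square algebra_simps)
qed



theorem proposition2:
  fixes n :: nat and t :: "nat \<Rightarrow> real"
    and \<phi> :: "nat \<Rightarrow> real \<Rightarrow> real" and \<phi>2 :: "nat \<Rightarrow> real \<Rightarrow> real"
    and c :: "nat \<Rightarrow> nat \<Rightarrow> real"
  assumes n: "n \<ge> 1"
    and t_incr: "\<forall>i\<in>{1..n}. t i < t (Suc i)"
    and spl: "\<forall>k\<le>n+2. cubic_spline_C2 n t (\<phi> k)"
    and d2: "\<forall>k\<le>n+2. has_second_deriv_on (t 1) (t (n+1)) (\<phi> k) (\<phi>2 k)"
    and phi0: "(\<forall>i\<in>{1..n+1}. \<phi> 0 (t i) = 0) \<and> \<phi>2 0 (t 1) = 1 \<and> \<phi>2 0 (t (n+1)) = 0"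
    and phij: "\<forall>j\<in>{1..n+1}. (\<forall>i\<in>{1..n+1}. \<phi> j (t i) = (if i = j then 1 else 0))
                 \<and> \<phi>2 j (t 1) = 0 \<and> \<phi>2 j (t (n+1)) = 0"
    and phin2: "(\<forall>i\<in>{1..n+1}. \<phi> (n+2) (t i) = 0) \<and> \<phi>2 (n+2) (t 1) = 0 \<and> \<phi>2 (n+2) (t (n+1)) = 1"
    and c_def: "\<forall>k\<in>{1..n+3}. \<forall>l\<in>{1..n+3}.
                 c k l = integral {t 1..t (n+1)} (\<lambda>x. \<phi>2 (k-1) x * \<phi>2 (l-1) x)"
  shows "
    ((\<forall>k\<in>{1..n+3}. \<forall>l\<in>{1..n+3}. c k l = c l k) \<and>
     (\<forall>v :: nat \<Rightarrow> real. (\<Sum>k=1..n+3. \<Sum>l=1..n+3. v k * c k l * v l) \<ge> 0)) \<and>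
    (\<forall>u1 un1 :: real. \<forall>p :: nat \<Rightarrow> real.
       (let w = (\<lambda>k. if k = 1 then u1 else if k = n+3 then un1 else p (k-1))
        in (\<Sum>k=1..n+3. \<Sum>l=1..n+3. w k * c k l * w l) = 0)
       \<longleftrightarrow> (u1 = 0 \<and> un1 = 0 \<and> (\<exists>a b. \<forall>i\<in>{1..n+1}. p i = a + b * t i))) \<and>
    (\<forall>j\<in>{1..n+1}. c 1 (j+1) = 0 \<and> c (n+3) (j+1) = 0) \<and>
    (c 1 (n+3) = c (n+3) 1 \<and>
     (\<forall>x y :: real. (x, y) \<noteq> (0, 0) \<longrightarrow>
        x * c 1 1 * x + x * c 1 (n+3) * y + y * c (n+3) 1 * x + y * c (n+3) (n+3) * y > 0)) \<and>
    (\<forall>p :: nat \<Rightarrow> real.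
       (\<forall>i\<in>{1..n+1}. (\<Sum>j=1..n+1. c (i+1) (j+1) * p j) = 0)
       \<longleftrightarrow> (\<exists>a b. \<forall>i\<in>{1..n+1}. p i = a + b * t i)) \<and>
    (\<forall>u1 un1 :: real. \<forall>p :: nat \<Rightarrow> real. \<forall>s2.
       has_second_deriv_on (t 1) (t (n+1))
         (\<lambda>x. u1 * \<phi> 0 x + (\<Sum>j=1..n+1. p j * \<phi> j x) + un1 * \<phi> (n+2) x) s2
       \<longrightarrow> integral {t 1..t (n+1)} (\<lambda>x. \<bar>s2 x\<bar>^2) =
           u1^2 * c 1 1 + un1^2 * c (n+3) (n+3) + 2 * c 1 (n+3) * u1 * un1 +
           (\<Sum>i=1..n+1. \<Sum>j=1..n+1. p i * c (i+1) (j+1) * p j))"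
  proof -
  let ?I = "{t 1..t (n+1)}"
  have mono0: "1 \<le> i \<Longrightarrow> i + d \<le> n+1 \<Longrightarrow> t i \<le> t (i+d)" for i d
  proof (induction d)
    case 0 then show ?case by simp
  next
    case (Suc d)
    have "t (i+d) < t (Suc (i+d))" using t_incr Suc.prems by auto
    then show ?case using Suc by simp
  qed
  have mono: "\<And>i j. 1 \<le> i \<Longrightarrow> i \<le> j \<Longrightarrow> j \<le> n+1 \<Longrightarrow> t i \<le> t j"
    using mono0 by (metis le_add_diff_inverse)
  have T: "t 1 < t (n+1)"
  proof -
    have "t 1 < t (Suc 1)" using t_incr n by auto
    also have "t (Suc 1) \<le> t (n+1)" using mono[of "Suc 1" "n+1"] n by simp
    finally show ?thesis .
  qed
  have t_in: "t i \<in> ?I" if "i \<in> {1..n+1}" for i using mono[of 1 i] mono[of i "n+1"] that by auto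
  have cont: "continuous_on ?I (\<phi>2 k)" if kk: "k \<le> n+2" for k
  proof -
    obtain s2 where s2: "has_second_deriv_on (t 1) (t (n+1)) (\<phi> k) s2" "continuous_on ?I s2"
      using spl kk unfolding cubic_spline_C2_def C2_on_def by blast
    have "\<phi>2 k x = s2 x" if "x \<in> ?I" for x
      using second_deriv_unique[OF T _ s2(1) _ that] d2 \<open>k \<le> n+2\<close> by blast
    then show ?thesis using s2(2) continuous_on_cong by blast
  qed
  have pwk: "pw n t (\<phi>2 k)" if "k \<le> n+2" for k
    using pw_spline[OF t_incr mono] spl d2 that by blast
  define S where "S u v p x = u * \<phi> 0 x + (\<Sum>j=1..n+1. p j * \<phi> j x) + v * \<phi> (n+2) x" for u v and p :: "nat \<Rightarrow> real" and x
  define S2 where "S2 u v p x = u * \<phi>2 0 x + (\<Sum>j=1..n+1. p j * \<phi>2 j x) + v * \<phi>2 (n+2) x" for u v and p :: "nat \<Rightarrow> real" and x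
  have sdS: "has_second_deriv_on (t 1) (t (n+1)) (S u v p) (S2 u v p)" for u v p
  proof -
    have a: "has_second_deriv_on (t 1) (t (n+1)) (\<lambda>x. \<Sum>j=1..n+1. p j * \<phi> j x) (\<lambda>x. \<Sum>j=1..n+1. p j * \<phi>2 j x)"
      by (rule sd_sum) (use d2 in auto)
    have b: "has_second_deriv_on (t 1) (t (n+1)) (\<lambda>x. u * \<phi> 0 x) (\<lambda>x. u * \<phi>2 0 x)"
      by (rule sd_scale) (use d2 in auto)
    have c: "has_second_deriv_on (t 1) (t (n+1)) (\<lambda>x. v * \<phi> (n+2) x) (\<lambda>x. v * \<phi>2 (n+2) x)"
      by (rule sd_scale) (use d2 in auto)
    have "has_second_deriv_on (t 1) (t (n+1)) (\<lambda>x. (u * \<phi> 0 x + (\<Sum>j=1..n+1. p j * \<phi> j x)) + v * \<phi> (n+2) x)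
      (\<lambda>x. (u * \<phi>2 0 x + (\<Sum>j=1..n+1. p j * \<phi>2 j x)) + v * \<phi>2 (n+2) x)"
      by (rule sd_add[OF sd_add[OF b a] c])
    then show ?thesis unfolding S_def[abs_def] S2_def[abs_def] .
  qed
  have S2sum: "S2 u v p x = (\<Sum>k=1..n+3. (if k = 1 then u else if k = n+3 then v else p (k-1)) * \<phi>2 (k-1) x)" for u v p x
    unfolding S2_def using reidx[where n=n and u=u and v=v and p=p and G="\<lambda>k. \<phi>2 (k-1) x"] by simp
  have contS2: "continuous_on ?I (S2 u v p)" for u v p
  proof -
    have "continuous_on ?I (\<lambda>x. u * \<phi>2 0 x + (\<Sum>j=1..n+1. p j * \<phi>2 j x) + v * \<phi>2 (n+2) x)"
      using cont by (intro continuous_intros) auto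
    then show ?thesis unfolding S2_def[abs_def] .
  qed
  have pwS2: "pw n t (S2 u v p)" for u v p
  proof -
    have "pw n t (\<lambda>x. (u * \<phi>2 0 x + (\<Sum>j=1..n+1. p j * \<phi>2 j x)) + v * \<phi>2 (n+2) x)"
      by (intro pw_add pw_scale pw_sum pwk) auto
    then show ?thesis unfolding S2_def[abs_def] .
  qed
  have S_knot: "S u v p (t i) = p i" if "i \<in> {1..n+1}" for u v p i
  proof -
    have "(\<Sum>j=1..n+1. p j * \<phi> j (t i)) = (\<Sum>j=1..n+1. if j = i then p j else 0)"
      by (rule sum.cong) (use phij that in auto)
    also have "\<dots> = p i" using that by simp
    finally show ?thesis unfolding S_def using phi0 phin2 that by simp
  qed
  have S2_ends: "S2 u v p (t 1) = u" "S2 u v p (t (n+1)) = v" for u v p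
  proof -
    have "(\<Sum>j=1..n+1. p j * \<phi>2 j (t 1)) = 0" "(\<Sum>j=1..n+1. p j * \<phi>2 j (t (n+1))) = 0"
      using phij by auto
    then show "S2 u v p (t 1) = u" "S2 u v p (t (n+1)) = v" unfolding S2_def using phi0 phin2 by auto
  qed
  have QF: "(\<Sum>k=1..n+3. \<Sum>l=1..n+3. v k * c k l * v l) = integral ?I (\<lambda>x. (\<Sum>k=1..n+3. v k * \<phi>2 (k-1) x)^2)" for v
  proof -
    have "integral ?I (\<lambda>x. (\<Sum>k=1..n+3. v k * \<phi>2 (k-1) x)^2) =
       (\<Sum>k=1..n+3. \<Sum>l=1..n+3. v k * integral ?I (\<lambda>x. \<phi>2 (k-1) x * \<phi>2 (l-1) x) * v l)"
      by (rule qf) (use cont in auto)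
    also have "\<dots> = (\<Sum>k=1..n+3. \<Sum>l=1..n+3. v k * c k l * v l)"
      using c_def by (intro sum.cong refl) auto
    finally show ?thesis by simp
  qed
  have QFS: "(\<Sum>k=1..n+3. \<Sum>l=1..n+3. (if k = 1 then u else if k = n+3 then v else p (k-1)) * c k l * (if l = 1 then u else if l = n+3 then v else p (l-1)))
     = integral ?I (\<lambda>x. (S2 u v p x)^2)" for u v p
    using QF[of "\<lambda>k. if k = 1 then u else if k = n+3 then v else p (k-1)"] S2sum by simp
  have fwd: "u = 0 \<and> v = 0 \<and> (\<exists>a b. \<forall>i\<in>{1..n+1}. p i = a + b * t i)"
    if h0: "integral ?I (\<lambda>x. (S2 u v p x)^2) = 0" for u v p
  proof -
    have z: "S2 u v p x = 0" if "x \<in> ?I" for x using int_sq_zero[OF T contS2 h0 that] .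
    have uv: "u = 0" "v = 0" using z[of "t 1"] z[of "t (n+1)"] S2_ends[of u v p] T by auto
    obtain s1 where s1: "\<forall>x\<in>?I. (S u v p has_real_derivative s1 x) (at x within ?I) \<and>
                        (s1 has_real_derivative S2 u v p x) (at x within ?I)"
      using sdS[of u v p] unfolding has_second_deriv_on_def by blast
    have "\<exists>b. \<forall>x\<in>?I. s1 x = b"
      by (rule has_field_derivative_zero_constant) (use s1 z in auto)
    then obtain b where b: "\<forall>x\<in>?I. s1 x = b" by blast
    have "\<exists>a. \<forall>x\<in>?I. S u v p x - b * x = a"
    proof (rule has_field_derivative_zero_constant)
      fix x assume x: "x \<in> ?I"
      have "((\<lambda>x. S u v p x - b * x) has_real_derivative (s1 x - b * 1)) (at x within ?I)"
        using DERIV_diff[OF _ DERIV_cmult[OF DERIV_ident]] s1 x by blast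
      then show "((\<lambda>x. S u v p x - b * x) has_real_derivative 0) (at x within ?I)" using b x by simp
    qed auto
    then obtain a where a: "\<forall>x\<in>?I. S u v p x - b * x = a" by blast
    have "\<forall>i\<in>{1..n+1}. p i = a + b * t i"
    proof
      fix i assume i: "i \<in> {1..n+1}"
      show "p i = a + b * t i" using a t_in[OF i] S_knot[OF i, of u v p] by force
    qed
    then show ?thesis using uv by blast
  qed
  have bwd: "integral ?I (\<lambda>x. S2 0 0 p x * g2 x) = 0"
    if lin: "\<forall>i\<in>{1..n+1}. p i = a + b * t i" and g: "pw n t g2" "g2 (t 1) = 0" "g2 (t (n+1)) = 0" for p a b g2
  proof -
    have sd: "has_second_deriv_on (t 1) (t (n+1)) (\<lambda>x. S 0 0 p x - (a + b*x)) (\<lambda>x. S2 0 0 p x - 0)"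
      by (rule sd_diff[OF sdS sd_lin])
    have fz: "\<forall>i\<in>{1..n+1}. S 0 0 p (t i) - (a + b * t i) = 0" using S_knot lin by simp
    have "((\<lambda>x. (S2 0 0 p x - 0) * g2 x) has_integral 0) ?I"
      by (rule ibp[OF t_incr mono sd fz g])
    then show ?thesis by (simp add: integral_unique)
  qed
  have symm: "\<forall>k\<in>{1..n+3}. \<forall>l\<in>{1..n+3}. c k l = c l k"
    using c_def by (simp add: mult.commute)
  have nonneg: "\<forall>v :: nat \<Rightarrow> real. (\<Sum>k=1..n+3. \<Sum>l=1..n+3. v k * c k l * v l) \<ge> 0"
  proof
    fix v :: "nat \<Rightarrow> real"
    have "continuous_on ?I (\<lambda>x. (\<Sum>k=1..n+3. v k * \<phi>2 (k-1) x)^2)"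
      using cont by (intro continuous_intros) auto
    then have "0 \<le> integral ?I (\<lambda>x. (\<Sum>k=1..n+3. v k * \<phi>2 (k-1) x)^2)"
      by (intro integral_nonneg integrable_continuous_interval) auto
    then show "(\<Sum>k=1..n+3. \<Sum>l=1..n+3. v k * c k l * v l) \<ge> 0" using QF by simp
  qed
  have part2: "\<forall>u1 un1 :: real. \<forall>p :: nat \<Rightarrow> real.
       (let w = (\<lambda>k. if k = 1 then u1 else if k = n+3 then un1 else p (k-1))
        in (\<Sum>k=1..n+3. \<Sum>l=1..n+3. w k * c k l * w l) = 0)
       \<longleftrightarrow> (u1 = 0 \<and> un1 = 0 \<and> (\<exists>a b. \<forall>i\<in>{1..n+1}. p i = a + b * t i))"
  proof (intro allI)
    fix u1 un1 :: real and p :: "nat \<Rightarrow> real"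
    show "(let w = (\<lambda>k. if k = 1 then u1 else if k = n+3 then un1 else p (k-1))
        in (\<Sum>k=1..n+3. \<Sum>l=1..n+3. w k * c k l * w l) = 0)
       \<longleftrightarrow> (u1 = 0 \<and> un1 = 0 \<and> (\<exists>a b. \<forall>i\<in>{1..n+1}. p i = a + b * t i))"
      unfolding Let_def QFS
    proof
      assume "integral ?I (\<lambda>x. (S2 u1 un1 p x)\<^sup>2) = 0"
      then show "u1 = 0 \<and> un1 = 0 \<and> (\<exists>a b. \<forall>i\<in>{1..n+1}. p i = a + b * t i)" by (rule fwd)
    next
      assume h: "u1 = 0 \<and> un1 = 0 \<and> (\<exists>a b. \<forall>i\<in>{1..n+1}. p i = a + b * t i)"
      then obtain a b where ab: "\<forall>i\<in>{1..n+1}. p i = a + b * t i" by blast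
      have "integral ?I (\<lambda>x. S2 0 0 p x * S2 0 0 p x) = 0"
        by (rule bwd[OF ab pwS2 S2_ends(1) S2_ends(2)])
      then show "integral ?I (\<lambda>x. (S2 u1 un1 p x)\<^sup>2) = 0" using h by (simp add: power2_eq_square)
    qed
  qed
  have part3: "\<forall>j\<in>{1..n+1}. c 1 (j+1) = 0 \<and> c (n+3) (j+1) = 0"
  proof
    fix j assume j: "j \<in> {1..n+1}"
    have g: "pw n t (\<phi>2 j)" "\<phi>2 j (t 1) = 0" "\<phi>2 j (t (n+1)) = 0" using pwk phij j by auto
    have "((\<lambda>x. \<phi>2 0 x * \<phi>2 j x) has_integral 0) ?I"
      by (rule ibp[OF t_incr mono _ _ g]) (use d2 phi0 in auto)
    moreover have "((\<lambda>x. \<phi>2 (n+2) x * \<phi>2 j x) has_integral 0) ?I"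
      by (rule ibp[OF t_incr mono _ _ g]) (use d2 phin2 in auto)
    moreover have "c 1 (j+1) = integral ?I (\<lambda>x. \<phi>2 0 x * \<phi>2 j x)"
      "c (n+3) (j+1) = integral ?I (\<lambda>x. \<phi>2 (n+2) x * \<phi>2 j x)" using c_def j by auto
    ultimately show "c 1 (j+1) = 0 \<and> c (n+3) (j+1) = 0" by (simp add: integral_unique)
  qed
  have z: "\<forall>j\<in>{1..n+1}. c 1 (j+1) = 0 \<and> c (n+3) (j+1) = 0 \<and> c (j+1) 1 = 0 \<and> c (j+1) (n+3) = 0"
    using part3 symm by force
  have s13: "c (n+3) 1 = c 1 (n+3)" using symm by force
  have BL: "(\<Sum>k=1..n+3. \<Sum>l=1..n+3. (if k = 1 then u else if k = n+3 then v else p (k-1)) * c k l *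
            (if l = 1 then u else if l = n+3 then v else p (l-1))) =
     u^2 * c 1 1 + v^2 * c (n+3) (n+3) + 2 * c 1 (n+3) * u * v +
           (\<Sum>i=1..n+1. \<Sum>j=1..n+1. p i * c (i+1) (j+1) * p j)" for u v p
    by (rule block[OF z s13])
  have part4: "c 1 (n+3) = c (n+3) 1 \<and>
     (\<forall>x y :: real. (x, y) \<noteq> (0, 0) \<longrightarrow>
        x * c 1 1 * x + x * c 1 (n+3) * y + y * c (n+3) 1 * x + y * c (n+3) (n+3) * y > 0)"
  proof (intro conjI allI impI)
    show "c 1 (n+3) = c (n+3) 1" using s13 by simp
    fix x y :: real assume xy: "(x, y) \<noteq> (0, 0)"
    have e0: "(\<Sum>i=1..n+1. \<Sum>j=1..n+1. (\<lambda>_. 0::real) i * c (i+1) (j+1) * (\<lambda>_. 0::real) j) = 0" by simp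
    have e1: "integral ?I (\<lambda>z. (S2 x y (\<lambda>_. 0) z)^2) = x^2 * c 1 1 + y^2 * c (n+3) (n+3) + 2 * c 1 (n+3) * x * y +
           (\<Sum>i=1..n+1. \<Sum>j=1..n+1. (\<lambda>_. 0::real) i * c (i+1) (j+1) * (\<lambda>_. 0::real) j)"
      by (rule trans[OF QFS[of x y "\<lambda>_. 0", symmetric] BL[of x y "\<lambda>_. 0"]])
    have e2: "x * c 1 1 * x + x * c 1 (n+3) * y + y * c (n+3) 1 * x + y * c (n+3) (n+3) * y
       = x^2 * c 1 1 + y^2 * c (n+3) (n+3) + 2 * c 1 (n+3) * x * y"
      using s13 by (simp add: power2_eq_square algebra_simps)
    have "x * c 1 1 * x + x * c 1 (n+3) * y + y * c (n+3) 1 * x + y * c (n+3) (n+3) * y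
       = integral ?I (\<lambda>z. (S2 x y (\<lambda>_. 0) z)^2)"
      using e0 e1 e2 by linarith
    moreover have "integral ?I (\<lambda>z. (S2 x y (\<lambda>_. 0) z)^2) \<ge> 0"
      by (subst QFS[symmetric]) (rule spec[OF nonneg])
    moreover have "integral ?I (\<lambda>z. (S2 x y (\<lambda>_. 0) z)^2) \<noteq> 0"
      using fwd[of x y "\<lambda>_. 0"] xy by auto
    ultimately show "x * c 1 1 * x + x * c 1 (n+3) * y + y * c (n+3) 1 * x + y * c (n+3) (n+3) * y > 0"
      by linarith
  qed
  have part5: "\<forall>p :: nat \<Rightarrow> real.
       (\<forall>i\<in>{1..n+1}. (\<Sum>j=1..n+1. c (i+1) (j+1) * p j) = 0)
       \<longleftrightarrow> (\<exists>a b. \<forall>i\<in>{1..n+1}. p i = a + b * t i)"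
  proof (intro allI iffI)
    fix p :: "nat \<Rightarrow> real"
    assume h: "\<forall>i\<in>{1..n+1}. (\<Sum>j=1..n+1. c (i+1) (j+1) * p j) = 0"
    have "(\<Sum>i=1..n+1. \<Sum>j=1..n+1. p i * c (i+1) (j+1) * p j) = (\<Sum>i=1..n+1. p i * (\<Sum>j=1..n+1. c (i+1) (j+1) * p j))"
      by (simp add: sum_distrib_left algebra_simps)
    also have "\<dots> = 0" using h by simp
    finally have e0: "(\<Sum>i=1..n+1. \<Sum>j=1..n+1. p i * c (i+1) (j+1) * p j) = 0" .
    have "integral ?I (\<lambda>x. (S2 0 0 p x)^2) = 0^2 * c 1 1 + 0^2 * c (n+3) (n+3) + 2 * c 1 (n+3) * 0 * 0 +
           (\<Sum>i=1..n+1. \<Sum>j=1..n+1. p i * c (i+1) (j+1) * p j)"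
      by (rule trans[OF QFS[of 0 0 p, symmetric] BL[of 0 0 p]])
    then have "integral ?I (\<lambda>x. (S2 0 0 p x)^2) = 0" using e0 by simp
    then show "\<exists>a b. \<forall>i\<in>{1..n+1}. p i = a + b * t i" using fwd by blast
  next
    fix p :: "nat \<Rightarrow> real"
    assume "\<exists>a b. \<forall>i\<in>{1..n+1}. p i = a + b * t i"
    then obtain a b where ab: "\<forall>i\<in>{1..n+1}. p i = a + b * t i" by blast
    show "\<forall>i\<in>{1..n+1}. (\<Sum>j=1..n+1. c (i+1) (j+1) * p j) = 0"
    proof
      fix i assume i: "i \<in> {1..n+1}"
      have int: "(\<lambda>x. p j * (\<phi>2 j x * \<phi>2 i x)) integrable_on ?I" if "j \<in> {1..n+1}" for j
        using cont that i by (intro integrable_continuous_interval continuous_intros) auto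
      have "integral ?I (\<lambda>x. S2 0 0 p x * \<phi>2 i x) = integral ?I (\<lambda>x. \<Sum>j=1..n+1. p j * (\<phi>2 j x * \<phi>2 i x))"
        by (rule integral_cong) (simp only: S2_def sum_distrib_right mult.assoc mult_zero_left add_0 add_0_right)
      also have "\<dots> = (\<Sum>j=1..n+1. integral ?I (\<lambda>x. p j * (\<phi>2 j x * \<phi>2 i x)))"
        by (rule integral_sum) (use int in auto)
      also have "\<dots> = (\<Sum>j=1..n+1. c (i+1) (j+1) * p j)"
        using c_def i by (intro sum.cong refl) (auto simp: mult.commute)
      finally have "(\<Sum>j=1..n+1. c (i+1) (j+1) * p j) = integral ?I (\<lambda>x. S2 0 0 p x * \<phi>2 i x)" by simp
      also have "\<dots> = 0" using bwd[OF ab] pwk phij i by auto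
      finally show "(\<Sum>j=1..n+1. c (i+1) (j+1) * p j) = 0" .
    qed
  qed
  have part6: "\<forall>u1 un1 :: real. \<forall>p :: nat \<Rightarrow> real. \<forall>s2.
       has_second_deriv_on (t 1) (t (n+1))
         (\<lambda>x. u1 * \<phi> 0 x + (\<Sum>j=1..n+1. p j * \<phi> j x) + un1 * \<phi> (n+2) x) s2
       \<longrightarrow> integral {t 1..t (n+1)} (\<lambda>x. \<bar>s2 x\<bar>^2) =
           u1^2 * c 1 1 + un1^2 * c (n+3) (n+3) + 2 * c 1 (n+3) * u1 * un1 +
           (\<Sum>i=1..n+1. \<Sum>j=1..n+1. p i * c (i+1) (j+1) * p j)"
  proof (intro allI impI)
    fix u1 un1 :: real and p :: "nat \<Rightarrow> real" and s2
    assume h: "has_second_deriv_on (t 1) (t (n+1))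
         (\<lambda>x. u1 * \<phi> 0 x + (\<Sum>j=1..n+1. p j * \<phi> j x) + un1 * \<phi> (n+2) x) s2"
    have h': "has_second_deriv_on (t 1) (t (n+1)) (S u1 un1 p) s2" using h unfolding S_def[abs_def] .
    have "s2 x = S2 u1 un1 p x" if "x \<in> ?I" for x
      using second_deriv_unique[OF T h' sdS _ that] by blast
    then have "integral ?I (\<lambda>x. \<bar>s2 x\<bar>^2) = integral ?I (\<lambda>x. (S2 u1 un1 p x)^2)"
      by (intro integral_cong) simp
    also have "\<dots> = u1^2 * c 1 1 + un1^2 * c (n+3) (n+3) + 2 * c 1 (n+3) * u1 * un1 +
           (\<Sum>i=1..n+1. \<Sum>j=1..n+1. p i * c (i+1) (j+1) * p j)"
      by (rule trans[OF QFS[of u1 un1 p, symmetric] BL[of u1 un1 p]])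
    finally show "integral {t 1..t (n+1)} (\<lambda>x. \<bar>s2 x\<bar>^2) =
           u1^2 * c 1 1 + un1^2 * c (n+3) (n+3) + 2 * c 1 (n+3) * u1 * un1 +
           (\<Sum>i=1..n+1. \<Sum>j=1..n+1. p i * c (i+1) (j+1) * p j)" .
  qed
  show ?thesis using symm nonneg part2 part3 part4 part5 part6 by blast
qed

end
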